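(* Let $B$ be a preorder on $\mathcal{SC}$. Then $\rho\dashv_B\mathsf{dual}(\rho)$ for every $\rho\in\mathcal{SC}$.
   Context: Fix base types $BT$ with preorder $\leq_{\mathsf b}$ and labels $\mathcal L$. Contract terms: $\sigma::=\mathbf 1\mid ?\mathtt t.\sigma\mid !\mathtt t.\sigma\mid !(\sigma).\sigma\mid ?(\sigma).\sigma\mid \sum_{i\in I}?l_i.\sigma_i\mid \bigoplus_{i\in I}!l_i.\sigma_i\mid \mu x.\sigma\mid x$ ($I$ finite nonempty, labels distinct). $\mathcal{SC}$ = closed guarded terms (guarded: in each $\mu x.\sigma'$, $x$ occurs in $\sigma'$ only under constructors other than $\mu$). A substitution $s$ is a finite partial map from variables to $\mathcal{SC}$; $\sigma s$ replaces free occurrences of $x\in\mathrm{dom}(s)$ by $s(x)$ (under $\mu y$ the variable $y$ is removed from the domain). LTS: $\mathbf 1\xrightarrow\checkmark$; $\lambda.\sigma\xrightarrow\lambda\sigma$ for prefixes (including $!l.\sigma$); $\bigoplus_{i\in I}!l_i.\sigma_i\xrightarrow\tau!l_i.\sigma_i$ for $|I|>1$; $\sum ?l_i.\sigma_i\xrightarrow{?l_i}\sigma_i$; $\mu x.\sigma\xrightarrow\tau\sigma[\mu x.\sigma/x]$. $\lambda_1\bowtie_B\lambda_2$ iff the pair is $(!l,?l)$, $(?l,!l)$, $(!\mathtt t_1,?\mathtt t_2)$ with $\mathtt t_1\leq_{\mathsf b}\mathtt t_2$, $(?\mathtt t_1,!\mathtt t_2)$ with $\mathtt t_2\leq_{\mathsf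 b}\mathtt t_1$, $(!(\sigma_1),?(\sigma_2))$ with $\sigma_1B\sigma_2$, $(?(\sigma_1),!(\sigma_2))$ with $\sigma_2B\sigma_1$. $\rho\|\sigma\xrightarrow\tau_B$ by a $\tau$ of either side, or $\rho\|\sigma\xrightarrow\tau_B\rho'\|\sigma'$ if $\rho\xrightarrow{\lambda_1}\rho'$, $\sigma\xrightarrow{\lambda_2}\sigma'$, $\lambda_1\bowtie_B\lambda_2$. $\dashv_B$: greatest $R\subseteq\mathcal{SC}^2$ with $\rho R\sigma$ implying (i) if $\rho\|\sigma$ has no $\xrightarrow\tau_B$ move then $\rho\xrightarrow\checkmark$ and $\sigma\xrightarrow\checkmark$; (ii) every $\rho\|\sigma\xrightarrow\tau_B\rho'\|\sigma'$ has $\rho'R\sigma'$. Standard dual $\overline{\cdot}$ (messages unchanged): $\overline{\mathbf 1}=\mathbf 1$, $\overline x=x$, $\overline{\mu x.\sigma}=\mu x.\overline\sigma$, $\overline{?\mathtt t.\sigma}=!\mathtt t.\overline\sigma$, $\overline{!\mathtt t.\sigma}=?\mathtt t.\overline\sigma$, $\overline{?(\sigma^m).\sigma}=!(\sigma^m).\overline\sigma$, $\overline{!(\sigma^m).\sigma}=?(\sigma^m).\overline\sigma$, $\overline{\sum_i ?l_i.\sigma_i}=\bigoplus_i !l_i.\overline{\sigma_i}$, $\overline{\bigoplus_i !l_i.\sigma_i}=\sum_i ?l_i.\overline{\sigma_i}$. M-closure: for $\sigma$ and substitution $s$ with free variables of $\sigma$ in $\mathrm{dom}(s)$, $\mathrm{mclo}(\sigma,s)$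 is: $\mathbf 1\mapsto\mathbf 1$; $x\mapsto x$; $!(\sigma^m).\sigma'\mapsto!(\sigma^m s).\mathrm{mclo}(\sigma',s)$; $?(\sigma^m).\sigma'\mapsto?(\sigma^m s).\mathrm{mclo}(\sigma',s)$; $?\mathtt t.\sigma'\mapsto?\mathtt t.\mathrm{mclo}(\sigma',s)$; $!\mathtt t.\sigma'\mapsto!\mathtt t.\mathrm{mclo}(\sigma',s)$; $\sum_i ?l_i.\sigma_i\mapsto\sum_i ?l_i.\mathrm{mclo}(\sigma_i,s)$; $\bigoplus_i !l_i.\sigma_i\mapsto\bigoplus_i !l_i.\mathrm{mclo}(\sigma_i,s)$; $\mu x.\sigma'\mapsto\mu x.\mathrm{mclo}(\sigma',s')$ where $s'$ maps $x$ to the closed term $(\mu x.\sigma')s$ and agrees with $s$ elsewhere. $\mathrm{mcl}(\sigma)=\mathrm{mclo}(\sigma,\varepsilon)$ ($\varepsilon$ empty substitution), and $\mathsf{dual}(\rho)=\overline{\mathrm{mcl}(\rho)}$. *)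

theory Defs
  imports Main
begin

text \<open>External sums and internal choices are lists of (label, continuation) pairs;
  well-formedness (nonempty, distinct labels) is part of the predicate SC.
  The single-branch internal choice Int [(l,s)] is the prefix !l.s,
  the single-branch external sum Ext [(l,s)] is the prefix ?l.s.\<close>

datatype ('b, 'l) ctr =
    One
  | InT 'b "('b, 'l) ctr"
  | OutT 'b "('b, 'l) ctr"
  | OutS "('b, 'l) ctr" "('b, 'l) ctr"
  | InS "('b, 'l) ctr" "('b, 'l) ctr"
  | Ext "('l \<times> ('b, 'l) ctr) list"
  | Intc "('l \<times> ('b, 'l) ctr) list"
  | Mu nat "('b, 'l) ctr"
  | Var nat

fun fv :: "('b, 'l) ctr \<Rightarrow> nat set" where
  "fv One = {}"
| "fv (InT t s) = fv s"
| "fv (OutT t s) = fv s"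
| "fv (OutS m s) = fv m \<union> fv s"
| "fv (InS m s) = fv m \<union> fv s"
| "fv (Ext xs) = (\<Union>p\<in>set xs. fv (snd p))"
| "fv (Intc xs) = (\<Union>p\<in>set xs. fv (snd p))"
| "fv (Mu x s) = fv s - {x}"
| "fv (Var x) = {x}"

fun exposed :: "nat \<Rightarrow> ('b, 'l) ctr \<Rightarrow> bool" where
  "exposed x (Var y) = (x = y)"
| "exposed x (Mu y s) = (x \<noteq> y \<and> exposed x s)"
| "exposed x _ = False"

fun guarded_wf :: "('b, 'l) ctr \<Rightarrow> bool" where
  "guarded_wf One = True"
| "guarded_wf (InT t s) = guarded_wf s"
| "guarded_wf (OutT t s) = guarded_wf s"
| "guarded_wf (OutS m s) = (guarded_wf m \<and> guarded_wf s)"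
| "guarded_wf (InS m s) = (guarded_wf m \<and> guarded_wf s)"
| "guarded_wf (Ext xs) = (xs \<noteq> [] \<and> distinct (map fst xs) \<and> (\<forall>p\<in>set xs. guarded_wf (snd p)))"
| "guarded_wf (Intc xs) = (xs \<noteq> [] \<and> distinct (map fst xs) \<and> (\<forall>p\<in>set xs. guarded_wf (snd p)))"
| "guarded_wf (Mu x s) = (\<not> exposed x s \<and> guarded_wf s)"
| "guarded_wf (Var x) = True"

definition SC :: "('b, 'l) ctr set" where
  "SC = {s. fv s = {} \<and> guarded_wf s}"

fun subst :: "(nat \<Rightarrow> ('b, 'l) ctr option) \<Rightarrow> ('b, 'l) ctr \<Rightarrow> ('b, 'l) ctr" where
  "subst sb One = One"
| "subst sb (InT t s) = InT t (subst sb s)"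
| "subst sb (OutT t s) = OutT t (subst sb s)"
| "subst sb (OutS m s) = OutS (subst sb m) (subst sb s)"
| "subst sb (InS m s) = InS (subst sb m) (subst sb s)"
| "subst sb (Ext xs) = Ext (map (\<lambda>p. (fst p, subst sb (snd p))) xs)"
| "subst sb (Intc xs) = Intc (map (\<lambda>p. (fst p, subst sb (snd p))) xs)"
| "subst sb (Mu y s) = Mu y (subst (sb(y := None)) s)"
| "subst sb (Var x) = (case sb x of Some t \<Rightarrow> t | None \<Rightarrow> Var x)"

datatype ('b, 'l) act =
    Check
  | Tau
  | AInT 'b | AOutT 'b
  | AInS "('b, 'l) ctr" | AOutS "('b, 'l) ctr"
  | AInL 'l | AOutL 'l

text \<open>The checkmark transition of One has no meaningful target; we use One.\<close>
inductive step :: "('b, 'l) ctr \<Rightarrow> ('b, 'l) act \<Rightarrow> ('b, 'l) ctr \<Rightarrow> bool" where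
  s_one: "step One Check One"
| s_int: "step (InT t s) (AInT t) s"
| s_outt: "step (OutT t s) (AOutT t) s"
| s_ins: "step (InS m s) (AInS m) s"
| s_outs: "step (OutS m s) (AOutS m) s"
| s_outl: "step (Intc [(l, s)]) (AOutL l) s"
| s_intc: "length xs > 1 \<Longrightarrow> (l, s) \<in> set xs \<Longrightarrow> step (Intc xs) Tau (Intc [(l, s)])"
| s_ext: "(l, s) \<in> set xs \<Longrightarrow> step (Ext xs) (AInL l) s"
| s_mu: "step (Mu x s) Tau (subst (Map.empty(x \<mapsto> Mu x s)) s)"

fun bowtie :: "('b \<times> 'b) set \<Rightarrow> (('b, 'l) ctr \<times> ('b, 'l) ctr) set
    \<Rightarrow> ('b, 'l) act \<Rightarrow> ('b, 'l) act \<Rightarrow> bool" where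
  "bowtie Lb B (AOutL l1) (AInL l2) = (l1 = l2)"
| "bowtie Lb B (AInL l1) (AOutL l2) = (l1 = l2)"
| "bowtie Lb B (AOutT t1) (AInT t2) = ((t1, t2) \<in> Lb)"
| "bowtie Lb B (AInT t1) (AOutT t2) = ((t2, t1) \<in> Lb)"
| "bowtie Lb B (AOutS s1) (AInS s2) = ((s1, s2) \<in> B)"
| "bowtie Lb B (AInS s1) (AOutS s2) = ((s2, s1) \<in> B)"
| "bowtie Lb B _ _ = False"

inductive sys_step :: "('b \<times> 'b) set \<Rightarrow> (('b, 'l) ctr \<times> ('b, 'l) ctr) set
    \<Rightarrow> ('b, 'l) ctr \<Rightarrow> ('b, 'l) ctr \<Rightarrow> ('b, 'l) ctr \<Rightarrow> ('b, 'l) ctr \<Rightarrow> bool" where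
  sys_left: "step r Tau r' \<Longrightarrow> sys_step Lb B r s r' s"
| sys_right: "step s Tau s' \<Longrightarrow> sys_step Lb B r s r s'"
| sys_sync: "step r a1 r' \<Longrightarrow> step s a2 s' \<Longrightarrow> bowtie Lb B a1 a2 \<Longrightarrow> sys_step Lb B r s r' s'"

definition compliance_rel :: "('b \<times> 'b) set \<Rightarrow> (('b, 'l) ctr \<times> ('b, 'l) ctr) set
    \<Rightarrow> (('b, 'l) ctr \<times> ('b, 'l) ctr) set \<Rightarrow> bool" where
  "compliance_rel Lb B R \<longleftrightarrow> R \<subseteq> SC \<times> SC \<and>
     (\<forall>r s. (r, s) \<in> R \<longrightarrow>
        ((\<not> (\<exists>r' s'. sys_step Lb B r s r' s')) \<longrightarrow>
             (\<exists>r'. step r Check r') \<and> (\<exists>s'. step s Check s')) \<and>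
        (\<forall>r' s'. sys_step Lb B r s r' s' \<longrightarrow> (r', s') \<in> R))"

text \<open>The greatest such relation is the union of all of them.\<close>
definition compliant :: "('b \<times> 'b) set \<Rightarrow> (('b, 'l) ctr \<times> ('b, 'l) ctr) set
    \<Rightarrow> ('b, 'l) ctr \<Rightarrow> ('b, 'l) ctr \<Rightarrow> bool" where
  "compliant Lb B r s \<longleftrightarrow> (r, s) \<in> \<Union>{R. compliance_rel Lb B R}"

fun cdual :: "('b, 'l) ctr \<Rightarrow> ('b, 'l) ctr" where
  "cdual One = One"
| "cdual (Var x) = Var x"
| "cdual (Mu x s) = Mu x (cdual s)"
| "cdual (InT t s) = OutT t (cdual s)"
| "cdual (OutT t s) = InT t (cdual s)"
| "cdual (InS m s) = OutS m (cdual s)"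
| "cdual (OutS m s) = InS m (cdual s)"
| "cdual (Ext xs) = Intc (map (\<lambda>p. (fst p, cdual (snd p))) xs)"
| "cdual (Intc xs) = Ext (map (\<lambda>p. (fst p, cdual (snd p))) xs)"

fun mclo :: "('b, 'l) ctr \<Rightarrow> (nat \<Rightarrow> ('b, 'l) ctr option) \<Rightarrow> ('b, 'l) ctr" where
  "mclo One sb = One"
| "mclo (Var x) sb = Var x"
| "mclo (OutS m s) sb = OutS (subst sb m) (mclo s sb)"
| "mclo (InS m s) sb = InS (subst sb m) (mclo s sb)"
| "mclo (InT t s) sb = InT t (mclo s sb)"
| "mclo (OutT t s) sb = OutT t (mclo s sb)"
| "mclo (Ext xs) sb = Ext (map (\<lambda>p. (fst p, mclo (snd p) sb)) xs)"
| "mclo (Intc xs) sb = Intc (map (\<lambda>p. (fst p, mclo (snd p) sb)) xs)"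
| "mclo (Mu x s) sb = Mu x (mclo s (sb(x \<mapsto> subst sb (Mu x s))))"

definition mcl :: "('b, 'l) ctr \<Rightarrow> ('b, 'l) ctr" where
  "mcl s = mclo s Map.empty"

definition dual :: "('b, 'l) ctr \<Rightarrow> ('b, 'l) ctr" where
  "dual r = cdual (mcl r)"

end

theory Submission
  imports Defs
begin

definition clo :: "(nat \<Rightarrow> ('b, 'l) ctr option) \<Rightarrow> bool" where
  "clo sb \<longleftrightarrow> (\<forall>z v. sb z = Some v \<longrightarrow> fv v = {})"

definition gw :: "(nat \<Rightarrow> ('b, 'l) ctr option) \<Rightarrow> bool" where
  "gw sb \<longleftrightarrow> (\<forall>z v. sb z = Some v \<longrightarrow> guarded_wf v)"

lemma exposed_fv: "exposed x t \<Longrightarrow> x \<in> fv t"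
  by (induct x t rule: exposed.induct) auto

lemma subst_fv: "clo sb \<Longrightarrow> fv (subst sb t) \<subseteq> fv t - dom sb"
proof (induct sb t rule: subst.induct)
  case (8 sb y s)
  have "clo (sb(y := None))" using 8(2) by (auto simp: clo_def)
  then have "fv (subst (sb(y := None)) s) \<subseteq> fv s - dom (sb(y := None))" using 8(1) by blast
  then show ?case by auto
next
  case (9 sb x)
  then show ?case by (auto simp: clo_def split: option.splits)
qed fastforce+

lemma subst_id: "fv t \<inter> dom sb = {} \<Longrightarrow> subst sb t = t"
proof (induct sb t rule: subst.induct)
  case (6 sb xs)
  have "\<And>p. p \<in> set xs \<Longrightarrow> (fst p, subst sb (snd p)) = p"
  proof -
    fix p assume p: "p \<in> set xs"
    then have "fv (snd p) \<inter> dom sb = {}" using 6(2) by auto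
    then show "(fst p, subst sb (snd p)) = p" using 6(1)[OF p] by simp
  qed
  then show ?case by (simp add: map_idI)
next
  case (7 sb xs)
  have "\<And>p. p \<in> set xs \<Longrightarrow> (fst p, subst sb (snd p)) = p"
  proof -
    fix p assume p: "p \<in> set xs"
    then have "fv (snd p) \<inter> dom sb = {}" using 7(2) by auto
    then show "(fst p, subst sb (snd p)) = p" using 7(1)[OF p] by simp
  qed
  then show ?case by (simp add: map_idI)
next
  case (8 sb y s)
  have "fv s \<inter> dom (sb(y := None)) = {}" using 8(2) by auto
  from 8(1)[OF this] show ?case by (simp add: fun_upd_def)
next
  case (9 sb x)
  then show ?case by (auto split: option.splits)
qed auto

lemma subst_empty[simp]: "subst Map.empty t = t"
  by (rule subst_id) auto

lemma subst_closed: "fv t = {} \<Longrightarrow> subst sb t = t"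
  by (rule subst_id) auto

lemma subst_agree: "(\<forall>x\<in>fv t. sb x = sb' x) \<Longrightarrow> subst sb t = subst sb' t"
proof (induct sb t arbitrary: sb' rule: subst.induct)
  case (6 sb xs)
  then show ?case by auto
next
  case (7 sb xs)
  then show ?case by auto
next
  case (8 sb y s)
  have "\<forall>x\<in>fv s. (sb(y := None)) x = (sb'(y := None)) x" using 8(2) by auto
  from 8(1)[OF this] show ?case by (simp add: fun_upd_def)
qed auto

lemma subst_comp: "clo sb \<Longrightarrow> subst \<tau> (subst sb t) = subst (\<tau> ++ sb) t"
proof (induct sb t arbitrary: \<tau> rule: subst.induct)
  case (8 sb y s)
  have c: "clo (sb(y := None))" using 8(2) by (auto simp: clo_def)
  have e: "\<tau>(y := None) ++ sb(y := None) = (\<tau> ++ sb)(y := None)"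
    by (auto simp: map_add_def split: option.splits)
  have "subst (\<tau>(y := None)) (subst (sb(y := None)) s) = subst ((\<tau> ++ sb)(y := None)) s"
    using 8(1)[OF c, of "\<tau>(y := None)"] e by (simp add: fun_upd_def)
  then show ?case by simp
next
  case (9 sb x)
  then show ?case by (auto simp: clo_def map_add_def subst_closed split: option.splits)
qed auto

lemma exposed_subst: "clo sb \<Longrightarrow> exposed y (subst sb t) \<Longrightarrow> exposed y t"
proof (induct sb t rule: subst.induct)
  case (8 sb z s)
  have c: "clo (sb(z := None))" using 8(2) by (auto simp: clo_def)
  have "exposed y (subst (sb(z := None)) s)" using 8(3) by (auto split: if_splits)
  from 8(1)[OF c this] show ?case using 8(3) by auto
next
  case (9 sb x)
  then show ?case by (auto simp: clo_def dest: exposed_fv split: option.splits)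
qed auto

lemma guarded_subst: "clo sb \<Longrightarrow> gw sb \<Longrightarrow> guarded_wf t \<Longrightarrow> guarded_wf (subst sb t)"
proof (induct sb t rule: subst.induct)
  case (8 sb y s)
  have c: "clo (sb(y := None))" "gw (sb(y := None))" using 8(2,3) by (auto simp: clo_def gw_def)
  then show ?case using 8 exposed_subst[OF c(1)] by (auto simp: fun_upd_def)
next
  case (9 sb x)
  then show ?case by (auto simp: gw_def split: option.splits)
qed (auto simp: comp_def)


lemma exposed_mclo[simp]: "exposed y (mclo t \<tau>) = exposed y t"
  by (induct t \<tau> rule: mclo.induct) (auto simp: fun_upd_def)

lemma exposed_cdual[simp]: "exposed y (cdual t) = exposed y t"
  by (induct t rule: cdual.induct) auto

lemma fv_cdual[simp]: "fv (cdual t) = fv t"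
  by (induct t rule: cdual.induct) auto

lemma guarded_cdual[simp]: "guarded_wf (cdual t) = guarded_wf t"
  by (induct t rule: cdual.induct) (auto simp: comp_def)

lemma clo_upd: "clo \<tau> \<Longrightarrow> fv v = {} \<Longrightarrow> clo (\<tau>(x \<mapsto> v))"
  by (auto simp: clo_def)

lemma gw_upd: "gw \<tau> \<Longrightarrow> guarded_wf v \<Longrightarrow> gw (\<tau>(x \<mapsto> v))"
  by (auto simp: gw_def)

lemma mclo_fv: "clo \<tau> \<Longrightarrow> fv t \<subseteq> dom \<tau> \<Longrightarrow> fv (mclo t \<tau>) \<subseteq> fv t"
proof (induct t \<tau> rule: mclo.induct)
  case (3 m s sb)
  have "fv (subst sb m) \<subseteq> fv m" using subst_fv[OF 3(2), of m] by blast
  moreover have "fv (mclo s sb) \<subseteq> fv s" using 3 by simp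
  ultimately show ?case by simp blast
next
  case (4 m s sb)
  have "fv (subst sb m) \<subseteq> fv m" using subst_fv[OF 4(2), of m] by blast
  moreover have "fv (mclo s sb) \<subseteq> fv s" using 4 by simp
  ultimately show ?case by simp blast
next
  case (7 xs sb)
  have "\<And>p. p \<in> set xs \<Longrightarrow> fv (mclo (snd p) sb) \<subseteq> fv (snd p)"
  proof -
    fix p assume p: "p \<in> set xs"
    have "fv (snd p) \<subseteq> dom sb" using 7(3) p by auto
    then show "fv (mclo (snd p) sb) \<subseteq> fv (snd p)" using 7(1)[OF p 7(2)] by blast
  qed
  then show ?case by simp blast
next
  case (8 xs sb)
  have "\<And>p. p \<in> set xs \<Longrightarrow> fv (mclo (snd p) sb) \<subseteq> fv (snd p)"
  proof -
    fix p assume p: "p \<in> set xs"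
    have "fv (snd p) \<subseteq> dom sb" using 8(3) p by auto
    then show "fv (mclo (snd p) sb) \<subseteq> fv (snd p)" using 8(1)[OF p 8(2)] by blast
  qed
  then show ?case by simp blast
next
  case (9 x s sb)
  have "fv (subst sb (Mu x s)) = {}" using subst_fv[OF 9(2), of "Mu x s"] 9(3) by auto
  then have c: "clo (sb(x \<mapsto> subst sb (Mu x s)))" using clo_upd 9(2) by blast
  have "fv s \<subseteq> dom (sb(x \<mapsto> subst sb (Mu x s)))" using 9(3) by auto
  from 9(1)[OF c this] show ?case by (auto simp: fun_upd_def)
qed auto

lemma mclo_gw: "clo \<tau> \<Longrightarrow> gw \<tau> \<Longrightarrow> fv t \<subseteq> dom \<tau> \<Longrightarrow> guarded_wf t \<Longrightarrow> guarded_wf (mclo t \<tau>)"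
proof (induct t \<tau> rule: mclo.induct)
  case (3 m s sb)
  then show ?case using guarded_subst[OF 3(2,3), of m] by simp
next
  case (4 m s sb)
  then show ?case using guarded_subst[OF 4(2,3), of m] by simp
next
  case (7 xs sb)
  have "\<And>p. p \<in> set xs \<Longrightarrow> guarded_wf (mclo (snd p) sb)"
  proof -
    fix p assume p: "p \<in> set xs"
    have "fv (snd p) \<subseteq> dom sb" using 7(4) p by auto
    moreover have "guarded_wf (snd p)" using 7(5) p by auto
    ultimately show "guarded_wf (mclo (snd p) sb)" using 7(1)[OF p 7(2,3)] by blast
  qed
  then show ?case using 7(5) by (simp add: comp_def)
next
  case (8 xs sb)
  have "\<And>p. p \<in> set xs \<Longrightarrow> guarded_wf (mclo (snd p) sb)"
  proof -
    fix p assume p: "p \<in> set xs"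
    have "fv (snd p) \<subseteq> dom sb" using 8(4) p by auto
    moreover have "guarded_wf (snd p)" using 8(5) p by auto
    ultimately show "guarded_wf (mclo (snd p) sb)" using 8(1)[OF p 8(2,3)] by blast
  qed
  then show ?case using 8(5) by (simp add: comp_def)
next
  case (9 x s sb)
  have "fv (subst sb (Mu x s)) = {}" using subst_fv[OF 9(2), of "Mu x s"] 9(4) by auto
  then have c: "clo (sb(x \<mapsto> subst sb (Mu x s)))" using clo_upd 9(2) by blast
  have "guarded_wf (subst sb (Mu x s))" using guarded_subst[OF 9(2,3) 9(5)] .
  then have g: "gw (sb(x \<mapsto> subst sb (Mu x s)))" using gw_upd 9(3) by blast
  have "fv s \<subseteq> dom (sb(x \<mapsto> subst sb (Mu x s)))" using 9(4) by auto
  from 9(1)[OF c g this] show ?case using 9(5) by (auto simp: fun_upd_def)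
qed auto

lemma mclo_agree: "(\<forall>x\<in>fv t. \<tau> x = \<tau>' x) \<Longrightarrow> mclo t \<tau> = mclo t \<tau>'"
proof (induct t \<tau> arbitrary: \<tau>' rule: mclo.induct)
  case (3 m s sb)
  then show ?case using subst_agree[of m sb \<tau>'] by simp
next
  case (4 m s sb)
  then show ?case using subst_agree[of m sb \<tau>'] by simp
next
  case (7 xs sb)
  have "\<And>p. p \<in> set xs \<Longrightarrow> mclo (snd p) sb = mclo (snd p) \<tau>'"
  proof -
    fix p assume p: "p \<in> set xs"
    have "\<forall>x\<in>fv (snd p). sb x = \<tau>' x" using 7(2) p by auto
    then show "mclo (snd p) sb = mclo (snd p) \<tau>'" using 7(1)[OF p] by blast
  qed
  then show ?case by simp
next
  case (8 xs sb)
  have "\<And>p. p \<in> set xs \<Longrightarrow> mclo (snd p) sb = mclo (snd p) \<tau>'"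
  proof -
    fix p assume p: "p \<in> set xs"
    have "\<forall>x\<in>fv (snd p). sb x = \<tau>' x" using 8(2) p by auto
    then show "mclo (snd p) sb = mclo (snd p) \<tau>'" using 8(1)[OF p] by blast
  qed
  then show ?case by simp
next
  case (9 x s sb)
  have e: "subst sb (Mu x s) = subst \<tau>' (Mu x s)" using 9(2) by (intro subst_agree) auto
  have "\<forall>z\<in>fv s. (sb(x \<mapsto> subst sb (Mu x s))) z = (\<tau>'(x \<mapsto> subst \<tau>' (Mu x s))) z"
    using 9(2) e by auto
  from 9(1)[OF this] show ?case by (simp add: fun_upd_def)
qed auto

fun msgc :: "('b, 'l) ctr \<Rightarrow> bool" where
  "msgc One = True"
| "msgc (InT t s) = msgc s"
| "msgc (OutT t s) = msgc s"
| "msgc (OutS m s) = (fv m = {} \<and> msgc s)"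
| "msgc (InS m s) = (fv m = {} \<and> msgc s)"
| "msgc (Ext xs) = (\<forall>p\<in>set xs. msgc (snd p))"
| "msgc (Intc xs) = (\<forall>p\<in>set xs. msgc (snd p))"
| "msgc (Mu x s) = msgc s"
| "msgc (Var x) = True"

lemma msgc_mclo: "clo \<tau> \<Longrightarrow> fv t \<subseteq> dom \<tau> \<Longrightarrow> msgc (mclo t \<tau>)"
proof (induct t \<tau> rule: mclo.induct)
  case (3 m s sb)
  have "fv (subst sb m) = {}" using subst_fv[OF 3(2), of m] 3(3) by auto
  then show ?case using 3 by simp
next
  case (4 m s sb)
  have "fv (subst sb m) = {}" using subst_fv[OF 4(2), of m] 4(3) by auto
  then show ?case using 4 by simp
next
  case (7 xs sb)
  have "\<And>p. p \<in> set xs \<Longrightarrow> msgc (mclo (snd p) sb)"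
  proof -
    fix p assume p: "p \<in> set xs"
    have "fv (snd p) \<subseteq> dom sb" using 7(3) p by auto
    then show "msgc (mclo (snd p) sb)" using 7(1)[OF p 7(2)] by blast
  qed
  then show ?case by simp
next
  case (8 xs sb)
  have "\<And>p. p \<in> set xs \<Longrightarrow> msgc (mclo (snd p) sb)"
  proof -
    fix p assume p: "p \<in> set xs"
    have "fv (snd p) \<subseteq> dom sb" using 8(3) p by auto
    then show "msgc (mclo (snd p) sb)" using 8(1)[OF p 8(2)] by blast
  qed
  then show ?case by simp
next
  case (9 x s sb)
  have "fv (subst sb (Mu x s)) = {}" using subst_fv[OF 9(2), of "Mu x s"] 9(3) by auto
  then have c: "clo (sb(x \<mapsto> subst sb (Mu x s)))" using clo_upd 9(2) by blast
  have "fv s \<subseteq> dom (sb(x \<mapsto> subst sb (Mu x s)))" using 9(3) by auto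
  from 9(1)[OF c this] show ?case by (auto simp: fun_upd_def)
qed auto

lemma cdual_subst: "msgc t \<Longrightarrow> cdual (subst \<sigma> t) = subst (\<lambda>z. map_option cdual (\<sigma> z)) (cdual t)"
proof (induct \<sigma> t rule: subst.induct)
  case (1 sb)
  then show ?case by simp
next
  case (2 sb t s)
  then show ?case by simp
next
  case (3 sb t s)
  then show ?case by simp
next
  case (4 sb m s)
  then show ?case by (simp add: subst_closed)
next
  case (5 sb m s)
  then show ?case by (simp add: subst_closed)
next
  case (6 sb xs)
  then show ?case by simp
next
  case (7 sb xs)
  then show ?case by simp
next
  case (8 sb y s)
  have "(\<lambda>z. map_option cdual ((sb(y := None)) z)) = (\<lambda>z. map_option cdual (sb z))(y := None)"
    by auto
  with 8 show ?case by (simp add: fun_upd_def)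
next
  case (9 sb x)
  then show ?case by (auto split: option.splits)
qed


lemma clo_add: "clo \<tau> \<Longrightarrow> clo sb \<Longrightarrow> clo (\<tau> ++ sb)"
  by (auto simp: clo_def map_add_def split: option.splits)

lemma map_pair_cong: "(\<And>p. p \<in> set xs \<Longrightarrow> f (g (snd p)) = h (k (snd p))) \<Longrightarrow>
  map (\<lambda>p. (fst p, f (snd p))) (map (\<lambda>p. (fst p, g (snd p))) xs) =
  map (\<lambda>p. (fst p, h (snd p))) (map (\<lambda>p. (fst p, k (snd p))) xs)"
  by auto

lemma mclo_subst:
  "clo sb \<Longrightarrow> clo \<tau> \<Longrightarrow> fv s \<subseteq> dom \<tau> \<union> dom sb \<Longrightarrow>
   mclo (subst sb s) \<tau> = subst (\<lambda>z. map_option mcl (sb z)) (mclo s (\<tau> ++ sb))"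
proof (induct sb s arbitrary: \<tau> rule: subst.induct)
  case (4 sb m s)
  have c: "clo (\<tau> ++ sb)" using clo_add 4(3,4) by blast
  have "fv (subst (\<tau> ++ sb) m) = {}" using subst_fv[OF c, of m] 4(5) by auto
  then show ?case using 4 subst_comp[OF 4(3), of \<tau> m] by (simp add: subst_closed)
next
  case (5 sb m s)
  have c: "clo (\<tau> ++ sb)" using clo_add 5(3,4) by blast
  have "fv (subst (\<tau> ++ sb) m) = {}" using subst_fv[OF c, of m] 5(5) by auto
  then show ?case using 5 subst_comp[OF 5(3), of \<tau> m] by (simp add: subst_closed)
next
  case (6 sb xs)
  have "\<And>p. p \<in> set xs \<Longrightarrow> mclo (subst sb (snd p)) \<tau> = subst (\<lambda>z. map_option mcl (sb z)) (mclo (snd p) (\<tau> ++ sb))"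
  proof -
    fix p assume p: "p \<in> set xs"
    have "fv (snd p) \<subseteq> dom \<tau> \<union> dom sb" using 6(4) p by auto
    then show "?thesis p" using 6(1)[OF p 6(2,3)] by blast
  qed
  then have "map (\<lambda>p. (fst p, mclo (snd p) \<tau>)) (map (\<lambda>p. (fst p, subst sb (snd p))) xs) =
    map (\<lambda>p. (fst p, subst (\<lambda>z. map_option mcl (sb z)) (snd p))) (map (\<lambda>p. (fst p, mclo (snd p) (\<tau> ++ sb))) xs)"
    by (rule map_pair_cong[of xs "\<lambda>x. mclo x \<tau>" "subst sb" "subst (\<lambda>z. map_option mcl (sb z))" "\<lambda>x. mclo x (\<tau> ++ sb)"])
  then show ?case by (simp only: subst.simps mclo.simps)
next
  case (7 sb xs)
  have "\<And>p. p \<in> set xs \<Longrightarrow> mclo (subst sb (snd p)) \<tau> = subst (\<lambda>z. map_option mcl (sb z)) (mclo (snd p) (\<tau> ++ sb))"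
  proof -
    fix p assume p: "p \<in> set xs"
    have "fv (snd p) \<subseteq> dom \<tau> \<union> dom sb" using 7(4) p by auto
    then show "?thesis p" using 7(1)[OF p 7(2,3)] by blast
  qed
  then have "map (\<lambda>p. (fst p, mclo (snd p) \<tau>)) (map (\<lambda>p. (fst p, subst sb (snd p))) xs) =
    map (\<lambda>p. (fst p, subst (\<lambda>z. map_option mcl (sb z)) (snd p))) (map (\<lambda>p. (fst p, mclo (snd p) (\<tau> ++ sb))) xs)"
    by (rule map_pair_cong[of xs "\<lambda>x. mclo x \<tau>" "subst sb" "subst (\<lambda>z. map_option mcl (sb z))" "\<lambda>x. mclo x (\<tau> ++ sb)"])
  then show ?case by (simp only: subst.simps mclo.simps)
next
  case (8 sb y t)
  define v where "v = subst (\<tau> ++ sb) (Mu y t)"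
  have c: "clo (\<tau> ++ sb)" using clo_add[OF 8(3) 8(2)] .
  have vc: "fv v = {}" using subst_fv[OF c, of "Mu y t"] 8(4) unfolding v_def by auto
  have v2: "subst \<tau> (Mu y (subst (sb(y := None)) t)) = v"
    using subst_comp[OF 8(2), of \<tau> "Mu y t"] unfolding v_def by simp
  have c1: "clo (sb(y := None))" using 8(2) by (auto simp: clo_def)
  have c2: "clo (\<tau>(y \<mapsto> v))" using clo_upd[OF 8(3) vc] .
  have f: "fv t \<subseteq> dom (\<tau>(y \<mapsto> v)) \<union> dom (sb(y := None))" using 8(4) by auto
  have IH: "mclo (subst (sb(y := None)) t) (\<tau>(y \<mapsto> v)) =
      subst (\<lambda>z. map_option mcl ((sb(y := None)) z)) (mclo t (\<tau>(y \<mapsto> v) ++ sb(y := None)))"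
    using 8(1)[OF c1 c2 f] by (simp add: fun_upd_def)
  have e1: "(\<lambda>z. map_option mcl ((sb(y := None)) z)) = (\<lambda>z. map_option mcl (sb z))(y := None)"
    by auto
  have e2: "\<tau>(y \<mapsto> v) ++ sb(y := None) = (\<tau> ++ sb)(y \<mapsto> v)"
    by (auto simp: map_add_def split: option.splits)
  have "mclo (subst sb (Mu y t)) \<tau> = Mu y (mclo (subst (sb(y := None)) t) (\<tau>(y \<mapsto> v)))"
    using v2 by simp
  also have "\<dots> = Mu y (subst ((\<lambda>z. map_option mcl (sb z))(y := None)) (mclo t ((\<tau> ++ sb)(y \<mapsto> v))))"
    using IH e1 e2 by simp
  also have "\<dots> = subst (\<lambda>z. map_option mcl (sb z)) (mclo (Mu y t) (\<tau> ++ sb))"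
    unfolding v_def by simp
  finally show ?case .
next
  case (9 sb x)
  show ?case
  proof (cases "sb x")
    case None
    then show ?thesis by simp
  next
    case (Some w)
    then have "fv w = {}" using 9(1) by (auto simp: clo_def)
    then have "mclo w \<tau> = mclo w Map.empty" by (intro mclo_agree) auto
    then show ?thesis using Some by (simp add: mcl_def)
  qed
qed auto


lemma dual_simps[simp]:
  "dual One = One"
  "dual (Var x) = Var x"
  "dual (InT t s) = OutT t (dual s)"
  "dual (OutT t s) = InT t (dual s)"
  "dual (InS m s) = OutS m (dual s)"
  "dual (OutS m s) = InS m (dual s)"
  "dual (Ext xs) = Intc (map (\<lambda>p. (fst p, dual (snd p))) xs)"
  "dual (Intc xs) = Ext (map (\<lambda>p. (fst p, dual (snd p))) xs)"
  "dual (Mu x s) = Mu x (cdual (mclo s (Map.empty(x \<mapsto> Mu x s))))"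
  by (simp_all add: dual_def mcl_def comp_def)

lemma SC_simps:
  "InT t s \<in> SC \<Longrightarrow> s \<in> SC"
  "OutT t s \<in> SC \<Longrightarrow> s \<in> SC"
  "InS m s \<in> SC \<Longrightarrow> s \<in> SC \<and> m \<in> SC"
  "OutS m s \<in> SC \<Longrightarrow> s \<in> SC \<and> m \<in> SC"
  "Ext xs \<in> SC \<Longrightarrow> (l, s) \<in> set xs \<Longrightarrow> s \<in> SC"
  "Intc xs \<in> SC \<Longrightarrow> (l, s) \<in> set xs \<Longrightarrow> s \<in> SC"
  "Var x \<notin> SC"
  by (auto simp: SC_def)

lemma SC_Intc1: "s \<in> SC \<Longrightarrow> Intc [(l, s)] \<in> SC"
  by (auto simp: SC_def)

lemma SC_dual: "r \<in> SC \<Longrightarrow> dual r \<in> SC"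
proof -
  assume r: "r \<in> SC"
  have c: "clo (Map.empty :: nat \<Rightarrow> ('a, 'b) ctr option)" "gw (Map.empty :: nat \<Rightarrow> ('a, 'b) ctr option)"
    by (auto simp: clo_def gw_def)
  have "fv (mclo r Map.empty) \<subseteq> fv r" using mclo_fv[OF c(1)] r by (auto simp: SC_def)
  moreover have "guarded_wf (mclo r Map.empty)" using mclo_gw[OF c] r by (auto simp: SC_def)
  ultimately show ?thesis using r by (auto simp: SC_def dual_def mcl_def)
qed

lemma SC_unfold: "Mu x s \<in> SC \<Longrightarrow> subst (Map.empty(x \<mapsto> Mu x s)) s \<in> SC"
proof -
  assume m: "Mu x s \<in> SC"
  have c: "clo (Map.empty(x \<mapsto> Mu x s))" "gw (Map.empty(x \<mapsto> Mu x s))"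
    using m by (auto simp: clo_def gw_def SC_def)
  have "fv (subst (Map.empty(x \<mapsto> Mu x s)) s) \<subseteq> fv s - {x}" using subst_fv[OF c(1), of s] by auto
  moreover have "guarded_wf (subst (Map.empty(x \<mapsto> Mu x s)) s)"
    using guarded_subst[OF c] m by (auto simp: SC_def)
  ultimately show ?thesis using m by (auto simp: SC_def)
qed

lemma dual_unfold: "Mu x s \<in> SC \<Longrightarrow>
  dual (subst (Map.empty(x \<mapsto> Mu x s)) s) =
  subst (Map.empty(x \<mapsto> dual (Mu x s))) (cdual (mclo s (Map.empty(x \<mapsto> Mu x s))))"
proof -
  assume m: "Mu x s \<in> SC"
  let ?sb = "Map.empty(x \<mapsto> Mu x s)"
  have c: "clo ?sb" using m by (auto simp: clo_def SC_def)
  have c0: "clo (Map.empty :: nat \<Rightarrow> ('a, 'b) ctr option)" by (auto simp: clo_def)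
  have f: "fv s \<subseteq> dom Map.empty \<union> dom ?sb" using m by (auto simp: SC_def)
  have "mclo (subst ?sb s) Map.empty = subst (\<lambda>z. map_option mcl (?sb z)) (mclo s (Map.empty ++ ?sb))"
    using mclo_subst[OF c c0 f] .
  also have "(\<lambda>z. map_option mcl (?sb z)) = Map.empty(x \<mapsto> mcl (Mu x s))" by auto
  finally have e1: "mclo (subst ?sb s) Map.empty = subst (Map.empty(x \<mapsto> mcl (Mu x s))) (mclo s ?sb)" by (simp only: empty_map_add)
  have f2: "fv s \<subseteq> dom ?sb" using m by (auto simp: SC_def)
  have mc: "msgc (mclo s ?sb)" using msgc_mclo[OF c f2] .
  have "dual (subst ?sb s) = cdual (subst (Map.empty(x \<mapsto> mcl (Mu x s))) (mclo s ?sb))"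
    using e1 by (simp add: dual_def mcl_def)
  also have "\<dots> = subst (\<lambda>z. map_option cdual ((Map.empty(x \<mapsto> mcl (Mu x s))) z)) (cdual (mclo s ?sb))"
    using cdual_subst[OF mc] .
  also have "(\<lambda>z. map_option cdual ((Map.empty(x \<mapsto> mcl (Mu x s))) z)) = Map.empty(x \<mapsto> dual (Mu x s))"
    by (auto simp: dual_def)
  finally show ?thesis .
qed


definition mu_un :: "('b, 'l) ctr \<Rightarrow> ('b, 'l) ctr \<Rightarrow> bool" where
  "mu_un r r' \<longleftrightarrow> (\<exists>x s. r = Mu x s \<and> r' = subst (Map.empty(x \<mapsto> Mu x s)) s)"

definition isMu :: "('b, 'l) ctr \<Rightarrow> bool" where
  "isMu r \<longleftrightarrow> (\<exists>x s. r = Mu x s)"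

lemma mu_un_isMu: "mu_un r r' \<Longrightarrow> isMu r"
  by (auto simp: mu_un_def isMu_def)

lemma mu_un_det: "mu_un r a \<Longrightarrow> mu_un r b \<Longrightarrow> a = b"
  by (auto simp: mu_un_def)

lemma mu_un_SC: "mu_un r r' \<Longrightarrow> r \<in> SC \<Longrightarrow> r' \<in> SC"
  by (auto simp: mu_un_def intro: SC_unfold)

lemma mu_star_SC: "mu_un\<^sup>*\<^sup>* r r' \<Longrightarrow> r \<in> SC \<Longrightarrow> r' \<in> SC"
  by (induct rule: rtranclp_induct) (auto intro: mu_un_SC)

lemma isMu_step: "isMu r \<Longrightarrow> step r a r' \<Longrightarrow> a = Tau \<and> mu_un r r'"
  by (auto simp: isMu_def mu_un_def elim: step.cases)

lemma step_tau: "step r Tau a \<Longrightarrow> mu_un r a \<or> (\<exists>xs l s. r = Intc xs \<and> length xs > 1 \<and> a = Intc [(l, s)] \<and> (l, s) \<in> set xs)"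
  by (auto simp: mu_un_def elim: step.cases)

lemma mu_step: "mu_un r r' \<Longrightarrow> step r Tau r'"
  by (auto simp: mu_un_def intro: step.intros)

lemma nomu_star: "mu_un\<^sup>*\<^sup>* r r' \<Longrightarrow> \<not> isMu r \<Longrightarrow> r' = r"
  by (induct rule: converse_rtranclp_induct) (auto dest: mu_un_isMu)

lemma star_step: "mu_un\<^sup>*\<^sup>* r r' \<Longrightarrow> mu_un r r1 \<Longrightarrow> r \<noteq> r' \<Longrightarrow> mu_un\<^sup>*\<^sup>* r1 r'"
  by (erule converse_rtranclpE) (auto dest: mu_un_det)

lemma chain_step: "mu_un\<^sup>*\<^sup>* r r' \<or> mu_un\<^sup>*\<^sup>* r' r \<Longrightarrow> mu_un r r1 \<Longrightarrow> mu_un\<^sup>*\<^sup>* r1 r' \<or> mu_un\<^sup>*\<^sup>* r' r1"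
proof -
  assume h: "mu_un\<^sup>*\<^sup>* r r' \<or> mu_un\<^sup>*\<^sup>* r' r" and m: "mu_un r r1"
  show ?thesis
  proof (cases "mu_un\<^sup>*\<^sup>* r' r")
    case True
    then show ?thesis using m by (meson rtranclp.rtrancl_into_rtrancl)
  next
    case False
    then have "mu_un\<^sup>*\<^sup>* r r'" using h by blast
    moreover have "r \<noteq> r'" using False by auto
    ultimately show ?thesis using star_step m by blast
  qed
qed

lemma isMu_dual: "isMu (dual r) = isMu r"
  by (cases r) (auto simp: isMu_def)

lemma dual_mu_un: "r \<in> SC \<Longrightarrow> mu_un (dual r) b \<Longrightarrow> \<exists>r''. mu_un r r'' \<and> b = dual r''"
proof -
  assume r: "r \<in> SC" and m: "mu_un (dual r) b"
  have "isMu r" using mu_un_isMu[OF m] isMu_dual by blast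
  then obtain x s where rx: "r = Mu x s" by (auto simp: isMu_def)
  have "b = subst (Map.empty(x \<mapsto> dual (Mu x s))) (cdual (mclo s (Map.empty(x \<mapsto> Mu x s))))"
    using m rx by (auto simp: mu_un_def)
  also have "\<dots> = dual (subst (Map.empty(x \<mapsto> Mu x s)) s)"
    using dual_unfold r rx by metis
  finally show ?thesis using rx by (auto simp: mu_un_def)
qed

lemma dual_Intc: "dual r = Intc ys \<Longrightarrow> \<exists>xs. r = Ext xs \<and> ys = map (\<lambda>p. (fst p, dual (snd p))) xs"
  by (cases r) auto

definition R0 :: "(('b, 'l) ctr \<times> ('b, 'l) ctr) set" where
  "R0 = {(r, dual r') | r r'. r \<in> SC \<and> r' \<in> SC \<and> (mu_un\<^sup>*\<^sup>* r r' \<or> mu_un\<^sup>*\<^sup>* r' r)}"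

definition R2 :: "(('b, 'l) ctr \<times> ('b, 'l) ctr) set" where
  "R2 = {(Intc [(l, s)], dual r') | l s r' xs. r' \<in> SC \<and> mu_un\<^sup>*\<^sup>* r' (Intc xs) \<and> Intc xs \<in> SC \<and> (l, s) \<in> set xs}"

definition R3 :: "(('b, 'l) ctr \<times> ('b, 'l) ctr) set" where
  "R3 = {(r, Intc [(l, dual s)]) | r l s xs. r \<in> SC \<and> mu_un\<^sup>*\<^sup>* r (Ext xs) \<and> Ext xs \<in> SC \<and> (l, s) \<in> set xs}"

lemma R0I: "r \<in> SC \<Longrightarrow> (r, dual r) \<in> R0"
  by (auto simp: R0_def)


lemma sys_step_inv: "sys_step Lb B r s r' s' \<Longrightarrow>
  (step r Tau r' \<and> s' = s) \<or> (r' = r \<and> step s Tau s') \<or>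
  (\<exists>a1 a2. step r a1 r' \<and> step s a2 s' \<and> bowtie Lb B a1 a2)"
  by (auto elim: sys_step.cases)

lemma bowtie_tau[simp]: "bowtie Lb B Tau a = False" "bowtie Lb B a Tau = False"
  by (cases a; simp)+

lemma sync_same:
  assumes r: "r \<in> SC" and nm: "\<not> isMu r"
    and s1: "step r a1 a" and s2: "step (dual r) a2 b" and bt: "bowtie Lb B a1 a2"
  shows "a \<in> SC \<and> b = dual a"
proof (cases r)
  case One
  then show ?thesis using s1 bt by (auto elim: step.cases)
next
  case (InT t s)
  from s1 InT have "a = s" by (auto elim: step.cases)
  moreover from s2 InT have "b = dual s" by (auto elim: step.cases)
  ultimately show ?thesis using r InT SC_simps(1) by auto
next
  case (OutT t s)
  from s1 OutT have "a = s" by (auto elim: step.cases)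
  moreover from s2 OutT have "b = dual s" by (auto elim: step.cases)
  ultimately show ?thesis using r OutT SC_simps(2) by auto
next
  case (InS m s)
  from s1 InS have "a = s" by (auto elim: step.cases)
  moreover from s2 InS have "b = dual s" by (auto elim: step.cases)
  ultimately show ?thesis using r InS SC_simps(3) by auto
next
  case (OutS m s)
  from s1 OutS have "a = s" by (auto elim: step.cases)
  moreover from s2 OutS have "b = dual s" by (auto elim: step.cases)
  ultimately show ?thesis using r OutS SC_simps(4) by auto
next
  case (Ext xs)
  from s1 Ext obtain l where l: "a1 = AInL l" "(l, a) \<in> set xs" by (auto elim: step.cases)
  then have "a2 \<noteq> Tau" using bt by auto
  with s2 Ext obtain l' where l': "a2 = AOutL l'" "map (\<lambda>p. (fst p, dual (snd p))) xs = [(l', b)]"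
    by (auto elim: step.cases)
  from l'(2) obtain s0 where "xs = [(l', s0)]" "b = dual s0" by (cases xs) auto
  moreover have "a \<in> SC" using SC_simps(5)[OF _ l(2)] r Ext by blast
  ultimately show ?thesis using l l' bt by auto
next
  case (Intc xs)
  have "a1 \<noteq> Tau" using bt by auto
  with s1 Intc obtain l where l: "a1 = AOutL l" "xs = [(l, a)]" by (auto elim: step.cases)
  from s2 Intc l have "b = dual a" by (auto elim: step.cases)
  moreover have "a \<in> SC" using SC_simps(6)[of xs l a] l r Intc by simp
  ultimately show ?thesis by auto
next
  case (Mu x s)
  then show ?thesis using nm by (auto simp: isMu_def)
next
  case (Var x)
  then show ?thesis using r SC_simps(7) by auto
qed

lemma R0_succ:
  assumes r: "r \<in> SC" and r': "r' \<in> SC" and ch: "mu_un\<^sup>*\<^sup>* r r' \<or> mu_un\<^sup>*\<^sup>* r' r"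
    and st: "sys_step Lb B r (dual r') a b"
  shows "(a, b) \<in> R0 \<union> R2 \<union> R3"
proof -
  from sys_step_inv[OF st] consider (L) "step r Tau a" "b = dual r'" | (R) "a = r" "step (dual r') Tau b"
    | (S) a1 a2 where "step r a1 a" "step (dual r') a2 b" "bowtie Lb B a1 a2" by blast
  then show ?thesis
  proof cases
    case L
    from step_tau[OF L(1)] show ?thesis
    proof
      assume m: "mu_un r a"
      have "a \<in> SC" using mu_un_SC[OF m r] .
      moreover have "mu_un\<^sup>*\<^sup>* a r' \<or> mu_un\<^sup>*\<^sup>* r' a" using chain_step[OF ch m] .
      ultimately show ?thesis using r' L(2) unfolding R0_def by blast
    next
      assume "\<exists>xs l s. r = Intc xs \<and> length xs > 1 \<and> a = Intc [(l, s)] \<and> (l, s) \<in> set xs"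
      then obtain xs l s where h: "r = Intc xs" "a = Intc [(l, s)]" "(l, s) \<in> set xs" by blast
      have "\<not> isMu r" using h by (simp add: isMu_def)
      then have "mu_un\<^sup>*\<^sup>* r' r" using ch nomu_star by metis
      then show ?thesis using r r' h L(2) unfolding R2_def by blast
    qed
  next
    case R
    from step_tau[OF R(2)] show ?thesis
    proof
      assume m: "mu_un (dual r') b"
      obtain r'' where h: "mu_un r' r''" "b = dual r''" using dual_mu_un[OF r' m] by blast
      have "r'' \<in> SC" using mu_un_SC[OF h(1) r'] .
      moreover have "mu_un\<^sup>*\<^sup>* r r'' \<or> mu_un\<^sup>*\<^sup>* r'' r" using chain_step[of r' r r''] ch h(1) by blast
      ultimately show ?thesis using r R(1) h(2) unfolding R0_def by blast
    next
      assume "\<exists>xs l s. dual r' = Intc xs \<and> length xs > 1 \<and> b = Intc [(l, s)] \<and> (l, s) \<in> set xs"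
      then obtain ys l s where h: "dual r' = Intc ys" "b = Intc [(l, s)]" "(l, s) \<in> set ys" by blast
      obtain xs where x: "r' = Ext xs" "ys = map (\<lambda>p. (fst p, dual (snd p))) xs"
        using dual_Intc[OF h(1)] by blast
      obtain s0 where s0: "(l, s0) \<in> set xs" "s = dual s0" using h(3) x(2) by auto
      have "\<not> isMu r'" using x by (simp add: isMu_def)
      then have "mu_un\<^sup>*\<^sup>* r r'" using ch nomu_star by metis
      then show ?thesis using r r' x s0 h(2) R(1) unfolding R3_def by blast
    qed
  next
    case S
    have "a1 \<noteq> Tau" "a2 \<noteq> Tau" using S(3) by auto
    then have nm: "\<not> isMu r" "\<not> isMu (dual r')" using isMu_step S(1,2) by metis+
    then have "\<not> isMu r'" using isMu_dual by metis
    then have rr: "r' = r" using ch nm(1) nomu_star by metis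
    have "a \<in> SC \<and> b = dual a" using sync_same[OF r nm(1) S(1)] S(2,3) rr by blast
    then show ?thesis using R0I by blast
  qed
qed


lemma R2_succ:
  assumes r': "r' \<in> SC" and ch: "mu_un\<^sup>*\<^sup>* r' (Intc xs)" and ix: "Intc xs \<in> SC" and ls: "(l, s) \<in> set xs"
    and st: "sys_step Lb B (Intc [(l, s)]) (dual r') a b"
  shows "(a, b) \<in> R0 \<union> R2 \<union> R3"
proof -
  from sys_step_inv[OF st] consider (L) "step (Intc [(l, s)]) Tau a" "b = dual r'"
    | (R) "a = Intc [(l, s)]" "step (dual r') Tau b"
    | (S) a1 a2 where "step (Intc [(l, s)]) a1 a" "step (dual r') a2 b" "bowtie Lb B a1 a2" by blast
  then show ?thesis
  proof cases
    case L
    then show ?thesis using step_tau[OF L(1)] by (auto simp: mu_un_def)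
  next
    case R
    from step_tau[OF R(2)] show ?thesis
    proof
      assume m: "mu_un (dual r') b"
      obtain r'' where h: "mu_un r' r''" "b = dual r''" using dual_mu_un[OF r' m] by blast
      have "r' \<noteq> Intc xs" using mu_un_isMu[OF h(1)] by (auto simp: isMu_def)
      then have "mu_un\<^sup>*\<^sup>* r'' (Intc xs)" using star_step[OF ch h(1)] by blast
      moreover have "r'' \<in> SC" using mu_un_SC[OF h(1) r'] .
      ultimately show ?thesis using R(1) h(2) ix ls unfolding R2_def by blast
    next
      assume "\<exists>xs l s. dual r' = Intc xs \<and> length xs > 1 \<and> b = Intc [(l, s)] \<and> (l, s) \<in> set xs"
      then obtain ys where h: "dual r' = Intc ys" by blast
      obtain zs where x: "r' = Ext zs" using dual_Intc[OF h] by blast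
      have "\<not> isMu r'" using x by (simp add: isMu_def)
      then have "Intc xs = r'" using ch nomu_star by metis
      then show ?thesis using x by simp
    qed
  next
    case S
    have "a1 \<noteq> Tau" "a2 \<noteq> Tau" using S(3) by auto
    then have "\<not> isMu (dual r')" using isMu_step S(2) by metis
    then have "\<not> isMu r'" using isMu_dual by metis
    then have rr: "Intc xs = r'" using ch nomu_star by metis
    from S(1) \<open>a1 \<noteq> Tau\<close> have a: "a1 = AOutL l" "a = s" by (auto elim: step.cases)
    from S(2) rr[symmetric] \<open>a2 \<noteq> Tau\<close> obtain l' where l': "a2 = AInL l'"
      "(l', b) \<in> set (map (\<lambda>p. (fst p, dual (snd p))) xs)" by (auto elim: step.cases)
    have "l' = l" using S(3) a l' by auto
    then obtain s0 where s0: "(l, s0) \<in> set xs" "b = dual s0" using l'(2) by auto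
    have d: "distinct (map fst xs)" using ix by (auto simp: SC_def)
    have "s0 = s" using eq_key_imp_eq_value[OF d s0(1) ls] .
    moreover have "s \<in> SC" using SC_simps(6)[OF ix ls] .
    ultimately show ?thesis using R0I a s0 by blast
  qed
qed

lemma R3_succ:
  assumes r: "r \<in> SC" and ch: "mu_un\<^sup>*\<^sup>* r (Ext xs)" and ix: "Ext xs \<in> SC" and ls: "(l, s) \<in> set xs"
    and st: "sys_step Lb B r (Intc [(l, dual s)]) a b"
  shows "(a, b) \<in> R0 \<union> R2 \<union> R3"
proof -
  from sys_step_inv[OF st] consider (L) "step r Tau a" "b = Intc [(l, dual s)]"
    | (R) "a = r" "step (Intc [(l, dual s)]) Tau b"
    | (S) a1 a2 where "step r a1 a" "step (Intc [(l, dual s)]) a2 b" "bowtie Lb B a1 a2" by blast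
  then show ?thesis
  proof cases
    case R
    then show ?thesis using step_tau[OF R(2)] by (auto simp: mu_un_def)
  next
    case L
    from step_tau[OF L(1)] show ?thesis
    proof
      assume m: "mu_un r a"
      have "r \<noteq> Ext xs" using mu_un_isMu[OF m] by (auto simp: isMu_def)
      then have "mu_un\<^sup>*\<^sup>* a (Ext xs)" using star_step[OF ch m] by blast
      moreover have "a \<in> SC" using mu_un_SC[OF m r] .
      ultimately show ?thesis using L(2) ix ls unfolding R3_def by blast
    next
      assume "\<exists>xs l s. r = Intc xs \<and> length xs > 1 \<and> a = Intc [(l, s)] \<and> (l, s) \<in> set xs"
      then obtain ys where h: "r = Intc ys" by blast
      have "\<not> isMu r" using h by (simp add: isMu_def)
      then have "Ext xs = r" using ch nomu_star by metis
      then show ?thesis using h by simp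
    qed
  next
    case S
    have "a1 \<noteq> Tau" "a2 \<noteq> Tau" using S(3) by auto
    then have "\<not> isMu r" using isMu_step S(1) by metis
    then have rr: "Ext xs = r" using ch nomu_star by metis
    from S(2) \<open>a2 \<noteq> Tau\<close> have b: "a2 = AOutL l" "b = dual s" by (auto elim: step.cases)
    from S(1) rr[symmetric] obtain l' where l': "a1 = AInL l'" "(l', a) \<in> set xs"
      by (auto elim: step.cases)
    have "l' = l" using S(3) b l' by auto
    have d: "distinct (map fst xs)" using ix by (auto simp: SC_def)
    have "a = s" using eq_key_imp_eq_value[OF d _ ls] l'(2) \<open>l' = l\<close> by blast
    moreover have "s \<in> SC" using SC_simps(5)[OF ix ls] .
    ultimately show ?thesis using R0I b by blast
  qed
qed


lemma mu_left: "isMu r \<Longrightarrow> \<exists>a b. sys_step Lb B r d a b"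
  by (auto simp: isMu_def intro: sys_left step.intros)

lemma mu_right: "isMu d \<Longrightarrow> \<exists>a b. sys_step Lb B r d a b"
  by (auto simp: isMu_def intro: sys_right step.intros)

lemma R0_prog:
  assumes lb: "\<forall>t. (t, t) \<in> Lb" and bb: "\<forall>m\<in>SC. (m, m) \<in> B"
    and r: "r \<in> SC" and r': "r' \<in> SC" and ch: "mu_un\<^sup>*\<^sup>* r r' \<or> mu_un\<^sup>*\<^sup>* r' r"
  shows "(\<exists>a b. sys_step Lb B r (dual r') a b) \<or> (r = One \<and> dual r' = One)"
proof (cases "isMu r")
  case True
  then show ?thesis using mu_left by blast
next
  case nm: False
  show ?thesis
  proof (cases "isMu r'")
    case True
    then show ?thesis using mu_right isMu_dual by metis
  next
    case False
    then have rr: "r' = r" using ch nm nomu_star by metis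
    show ?thesis
    proof (cases r)
      case One
      then show ?thesis using rr by simp
    next
      case (InT t s)
      have "sys_step Lb B r (dual r') s (dual s)"
        using InT rr lb by (auto intro!: sys_sync[where ?a1.0 = "AInT t" and ?a2.0 = "AOutT t"] step.intros)
      then show ?thesis by blast
    next
      case (OutT t s)
      have "sys_step Lb B r (dual r') s (dual s)"
        using OutT rr lb by (auto intro!: sys_sync[where ?a1.0 = "AOutT t" and ?a2.0 = "AInT t"] step.intros)
      then show ?thesis by blast
    next
      case (InS m s)
      have "m \<in> SC" using SC_simps(3) r InS by blast
      then have "sys_step Lb B r (dual r') s (dual s)"
        using InS rr bb by (auto intro!: sys_sync[where ?a1.0 = "AInS m" and ?a2.0 = "AOutS m"] step.intros)
      then show ?thesis by blast
    next
      case (OutS m s)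
      have "m \<in> SC" using SC_simps(4) r OutS by blast
      then have "sys_step Lb B r (dual r') s (dual s)"
        using OutS rr bb by (auto intro!: sys_sync[where ?a1.0 = "AOutS m" and ?a2.0 = "AInS m"] step.intros)
      then show ?thesis by blast
    next
      case (Ext xs)
      have ne: "xs \<noteq> []" using r Ext by (auto simp: SC_def)
      then obtain p ys where xs: "xs = p # ys" by (cases xs) auto
      show ?thesis
      proof (cases "ys = []")
        case True
        obtain l s where p: "p = (l, s)" by (cases p)
        have "sys_step Lb B r (dual r') s (dual s)"
          using Ext rr xs True p
          by (auto intro!: sys_sync[where ?a1.0 = "AInL l" and ?a2.0 = "AOutL l"] step.intros)
        then show ?thesis by blast
      next
        case False
        have "sys_step Lb B r (dual r') r (Intc [(fst p, dual (snd p))])"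
          using Ext rr xs False by (auto intro!: sys_right step.intros)
        then show ?thesis by blast
      qed
    next
      case (Intc xs)
      have ne: "xs \<noteq> []" using r Intc by (auto simp: SC_def)
      then obtain p ys where xs: "xs = p # ys" by (cases xs) auto
      show ?thesis
      proof (cases "ys = []")
        case True
        obtain l s where p: "p = (l, s)" by (cases p)
        have "sys_step Lb B r (dual r') s (dual s)"
          using Intc rr xs True p
          by (auto intro!: sys_sync[where ?a1.0 = "AOutL l" and ?a2.0 = "AInL l"] step.intros)
        then show ?thesis by blast
      next
        case False
        have "step r Tau (Intc [(fst p, snd p)])"
          using Intc xs False s_intc[of "p # ys" "fst p" "snd p"] by simp
        then have "sys_step Lb B r (dual r') (Intc [(fst p, snd p)]) (dual r')"
          by (rule sys_left)
        then show ?thesis by blast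
      qed
    next
      case (Mu x s)
      then show ?thesis using nm by (auto simp: isMu_def)
    next
      case (Var x)
      then show ?thesis using r SC_simps(7) by auto
    qed
  qed
qed

lemma R2_prog:
  assumes ch: "mu_un\<^sup>*\<^sup>* r' (Intc xs)" and ls: "(l, s) \<in> set xs"
  shows "\<exists>a b. sys_step Lb B (Intc [(l, s)]) (dual r') a b"
proof (cases "isMu r'")
  case True
  then show ?thesis using mu_right isMu_dual by metis
next
  case False
  then have rr: "Intc xs = r'" using ch nomu_star by metis
  have mem: "(l, dual s) \<in> set (map (\<lambda>p. (fst p, dual (snd p))) xs)"
    unfolding set_map using imageI[OF ls, of "\<lambda>p. (fst p, dual (snd p))"] by simp
  have st2: "step (dual r') (AInL l) (dual s)" using s_ext[OF mem] rr[symmetric] by simp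
  have "sys_step Lb B (Intc [(l, s)]) (dual r') s (dual s)"
    by (rule sys_sync[OF s_outl st2]) simp
  then show ?thesis by blast
qed

lemma R3_prog:
  assumes ch: "mu_un\<^sup>*\<^sup>* r (Ext xs)" and ls: "(l, s) \<in> set xs"
  shows "\<exists>a b. sys_step Lb B r (Intc [(l, dual s)]) a b"
proof (cases "isMu r")
  case True
  then show ?thesis using mu_left by metis
next
  case False
  then have rr: "Ext xs = r" using ch nomu_star by metis
  have "sys_step Lb B r (Intc [(l, dual s)]) s (dual s)"
    using rr[symmetric] ls by (auto intro!: sys_sync[where ?a1.0 = "AInL l" and ?a2.0 = "AOutL l"] step.intros)
  then show ?thesis by blast
qed

lemma RR_compliance:
  fixes Lb :: "('b \<times> 'b) set" and B :: "(('b, 'l) ctr \<times> ('b, 'l) ctr) set"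
  assumes lb: "\<forall>t. (t, t) \<in> Lb" and bb: "\<forall>m\<in>SC. (m, m) \<in> B"
  shows "compliance_rel Lb B (R0 \<union> R2 \<union> R3)"
  unfolding compliance_rel_def
proof (rule conjI)
  show "R0 \<union> R2 \<union> R3 \<subseteq> SC \<times> SC"
    unfolding R0_def R2_def R3_def
    using SC_dual SC_Intc1 SC_simps(5,6) by fast
next
  show "\<forall>r d. (r, d) \<in> R0 \<union> R2 \<union> R3 \<longrightarrow>
     ((\<not> (\<exists>r' s'. sys_step Lb B r d r' s')) \<longrightarrow> (\<exists>r'. step r Check r') \<and> (\<exists>s'. step d Check s')) \<and>
     (\<forall>r' s'. sys_step Lb B r d r' s' \<longrightarrow> (r', s') \<in> R0 \<union> R2 \<union> R3)"
  proof (intro allI impI)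
  fix r d :: "('b, 'l) ctr" assume m: "(r, d) \<in> R0 \<union> R2 \<union> R3"
  then consider (A) r' where "d = dual r'" "r \<in> SC" "r' \<in> SC" "mu_un\<^sup>*\<^sup>* r r' \<or> mu_un\<^sup>*\<^sup>* r' r"
    | (B) l s r' xs where "r = Intc [(l, s)]" "d = dual r'" "r' \<in> SC" "mu_un\<^sup>*\<^sup>* r' (Intc xs)" "Intc xs \<in> SC" "(l, s) \<in> set xs"
    | (C) l s xs where "d = Intc [(l, dual s)]" "r \<in> SC" "mu_un\<^sup>*\<^sup>* r (Ext xs)" "Ext xs \<in> SC" "(l, s) \<in> set xs"
    unfolding R0_def R2_def R3_def by blast
  note cs = this
  have P1: "(\<not> (\<exists>r' s'. sys_step Lb B r d r' s')) \<longrightarrow> (\<exists>r'. step r Check r') \<and> (\<exists>s'. step d Check s')"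
  proof (cases rule: cs)
    case A
    then show ?thesis using R0_prog[OF lb bb A(2,3,4)] s_one by auto
  next
    case B
    then show ?thesis using R2_prog[OF B(4,6)] by blast
  next
    case C
    then show ?thesis using R3_prog[OF C(3,5)] by blast
  qed
  have P2: "\<forall>r' s'. sys_step Lb B r d r' s' \<longrightarrow> (r', s') \<in> R0 \<union> R2 \<union> R3"
  proof (intro allI impI)
    fix a b assume st: "sys_step Lb B r d a b"
    show "(a, b) \<in> R0 \<union> R2 \<union> R3"
    proof (cases rule: cs)
      case A
      then show ?thesis using R0_succ[OF A(2,3,4)] st by blast
    next
      case B
      then show ?thesis using R2_succ[OF B(3,4,5,6)] st by blast
    next
      case C
      then show ?thesis using R3_succ[OF C(2,3,4,5)] st by blast
    qed
  qed
  show "((\<not> (\<exists>r' s'. sys_step Lb B r d r' s')) \<longrightarrow> (\<exists>r'. step r Check r') \<and> (\<exists>s'. step d Check s')) \<and>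
     (\<forall>r' s'. sys_step Lb B r d r' s' \<longrightarrow> (r', s') \<in> R0 \<union> R2 \<union> R3)" using P1 P2 by blast
  qed
qed

theorem mainTheorem7:
  fixes Lb :: "('b \<times> 'b) set" and B :: "(('b, 'l) ctr \<times> ('b, 'l) ctr) set"
    and \<rho> :: "('b, 'l) ctr"
  assumes "preorder_on UNIV Lb"
    and "preorder_on SC B"
    and "\<rho> \<in> SC"
  shows "compliant Lb B \<rho> (dual \<rho>)"
proof -
  have lb: "\<forall>t. (t, t) \<in> Lb" using assms(1) by (auto simp: preorder_on_def refl_on_def)
  have bb: "\<forall>m\<in>SC. (m, m) \<in> B" using assms(2) by (auto simp: preorder_on_def refl_on_def)
  have "compliance_rel Lb B (R0 \<union> R2 \<union> R3)" using RR_compliance[OF lb bb] .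
  moreover have "(\<rho>, dual \<rho>) \<in> R0 \<union> R2 \<union> R3" using R0I[OF assms(3)] by blast
  ultimately show ?thesis unfolding compliant_def by blast
qed

end
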